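(* Let $\{\mathbf{x}_i\}_{i=1}^N\subset\mathbb{R}^{D_x}$ and $\{\mathbf{y}_i\}_{i=1}^N\subset\mathbb{R}^{D_y}$ be zero-mean data, $\mathbf{X}=[\mathbf{x}_1\,\cdots\,\mathbf{x}_N]$, $\mathbf{Y}=[\mathbf{y}_1\,\cdots\,\mathbf{y}_N]$, $\boldsymbol{\Sigma}_x=\frac1N\sum_i\mathbf{x}_i\mathbf{x}_i^\top$, $\boldsymbol{\Sigma}_y=\frac1N\sum_i\mathbf{y}_i\mathbf{y}_i^\top$, $\boldsymbol{\Sigma}_{xy}=\frac1N\sum_i\mathbf{x}_i\mathbf{y}_i^\top$. Let $\mathbf{W}=(w_{ij})\in\mathbb{R}^{N\times N}$ be a symmetric matrix with nonnegative entries, $d_i=\sum_{j=1}^N w_{ij}$, $d_{\max}=\max_i d_i$, $\mathbf{D}=\mathrm{diag}(d_1,\dots,d_N)$, $\mathbf{L}_{\mathcal{G}}=\mathbf{D}-\mathbf{W}$, and let $\gamma\ge 0$. Define $$f(\mathbf{u},\mathbf{v})=\mathbf{u}^\top\boldsymbol{\Sigma}_{xy}\mathbf{v}-\gamma\mathbf{u}^\top\mathbf{X}\mathbf{L}_{\mathcal{G}}\mathbf{Y}^\top\mathbf{v}-\frac{\gamma}{2}\sum_{i=1}^N d_i(\mathbf{u}^\top\mathbf{x}_i-\mathbf{v}^\top\mathbf{y}_i)^2,$$ and let $g(\mathbf{u},\mathbf{v})$ be obtained from $f$ by replacing $\sum_{i=1}^N d_i(\mathbf{u}^\top\mathbf{x}_i-\mathbf{v}^\top\mathbf{y}_i)^2$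 with $2d_{\max}N(\mathbf{u}^\top\boldsymbol{\Sigma}_x\mathbf{u}+\mathbf{v}^\top\boldsymbol{\Sigma}_y\mathbf{v})$. Then $g(\mathbf{u},\mathbf{v})\le f(\mathbf{u},\mathbf{v})$ for all $\mathbf{u}\in\mathbb{R}^{D_x},\mathbf{v}\in\mathbb{R}^{D_y}$, and on the set $\{\mathbf{u}^\top\boldsymbol{\Sigma}_x\mathbf{u}=1,\ \mathbf{v}^\top\boldsymbol{\Sigma}_y\mathbf{v}=1\}$, $g$ differs from $\mathbf{u}^\top\boldsymbol{\Sigma}_{xy}\mathbf{v}-\gamma\mathbf{u}^\top\mathbf{X}\mathbf{L}_{\mathcal{G}}\mathbf{Y}^\top\mathbf{v}$ only by a constant; hence maximizing $g$ subject to these constraints is equivalent to the problem $$\max_{\mathbf{u},\mathbf{v}}\ \mathbf{u}^\top\boldsymbol{\Sigma}_{xy}\mathbf{v}-\gamma\mathbf{u}^\top\mathbf{X}\mathbf{L}_{\mathcal{G}}\mathbf{Y}^\top\mathbf{v}\quad\text{s.t.}\quad \mathbf{u}^\top\boldsymbol{\Sigma}_x\mathbf{u}=1,\ \mathbf{v}^\top\boldsymbol{\Sigma}_y\mathbf{v}=1.$$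
   Context: $\mathbf{W}$ is the weighted adjacency matrix of an undirected graph $\mathcal{G}$ on $N$ nodes (the common-source graph), and $\mathbf{L}_{\mathcal{G}}$ is its Laplacian. The last displayed problem is called graph CCA (gCCA). *)

theory Defs
  imports "HOL-Analysis.Analysis"
begin

text \<open>Data points are indexed by a finite type 'n (so N = CARD('n)); feature
spaces are real^'dx and real^'dy.\<close>

definition outer :: "real ^ 'a \<Rightarrow> real ^ 'b \<Rightarrow> real ^ 'b ^ 'a" where
  "outer a b = (\<chi> i j. a $ i * b $ j)"

definition covmat :: "('n::finite \<Rightarrow> real ^ 'a) \<Rightarrow> ('n \<Rightarrow> real ^ 'b) \<Rightarrow> real ^ 'b ^ 'a" where
  "covmat x y = (1 / real CARD('n)) *\<^sub>R (\<Sum>i\<in>UNIV. outer (x i) (y i))"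

definition datamat :: "('n::finite \<Rightarrow> real ^ 'a) \<Rightarrow> real ^ 'n ^ 'a" where
  "datamat x = (\<chi> k i. x i $ k)"

definition degree :: "real ^ 'n ^ 'n \<Rightarrow> 'n::finite \<Rightarrow> real" where
  "degree W i = (\<Sum>j\<in>UNIV. W $ i $ j)"

definition dmax :: "real ^ 'n ^ 'n \<Rightarrow> real" where
  "dmax W = Max (range (degree (W :: real ^ 'n::finite ^ 'n)))"

definition laplacian :: "real ^ 'n ^ 'n \<Rightarrow> real ^ 'n ^ 'n" where
  "laplacian W = (\<chi> i j. (if i = j then degree (W :: real ^ 'n::finite ^ 'n) i else 0) - W $ i $ j)"

definition gcca_obj where
  "gcca_obj x y W \<gamma> u v =
     u \<bullet> (covmat x y *v v) - \<gamma> * (u \<bullet> ((datamat x ** laplacian W ** transpose (datamat y)) *v v))"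

definition f_obj where
  "f_obj x y W \<gamma> u v = gcca_obj x y W \<gamma> u v
     - \<gamma> / 2 * (\<Sum>i\<in>UNIV. degree W i * (u \<bullet> x i - v \<bullet> y i)^2)"

definition g_obj where
  "g_obj x y W \<gamma> u v = gcca_obj x y W \<gamma> u v
     - \<gamma> / 2 * (2 * dmax W * real CARD('n) *
         (u \<bullet> (covmat x x *v u) + v \<bullet> (covmat y y *v v)))"
  for x :: "'n::finite \<Rightarrow> real ^ 'a"

end

theory Submission
  imports Defs
begin
lemma outer_mv: "outer a b *v v = (b \<bullet> v) *\<^sub>R a"
  by (simp add: outer_def vec_eq_iff matrix_vector_mult_def inner_vec_def sum_distrib_left mult.commute mult.left_commute)
lemma sum_mv: "(\<Sum>i\<in>S. (A i :: real^'b^'a)) *v v = (\<Sum>i\<in>S. A i *v v)"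
  by (induction S rule: infinite_finite_induct) (auto simp: matrix_vector_mult_add_rdistrib)
lemma scale_mv: "(c *\<^sub>R (A :: real^'b^'a)) *v v = c *\<^sub>R (A *v v)"
  by (simp add: vec_eq_iff matrix_vector_mult_def sum_distrib_left mult.assoc)
lemma cov_quad: "u \<bullet> (covmat x x *v u) = (1 / real CARD('n)) * (\<Sum>i\<in>UNIV. (u \<bullet> x i)^2)"
  for x :: "'n::finite \<Rightarrow> real^'a"
  by (simp add: covmat_def scale_mv sum_mv outer_mv inner_sum_right power2_eq_square inner_commute)

theorem proposition1:
  fixes x :: "'n::finite \<Rightarrow> real ^ 'dx" and y :: "'n \<Rightarrow> real ^ 'dy"
    and W :: "real ^ 'n ^ 'n" and \<gamma> :: real
  assumes xmean: "(\<Sum>i\<in>UNIV. x i) = 0" and ymean: "(\<Sum>i\<in>UNIV. y i) = 0"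
    and Wsym: "transpose W = W" and Wnonneg: "\<forall>i j. W $ i $ j \<ge> 0"
    and gamma: "\<gamma> \<ge> 0"
  shows "(\<forall>u v. g_obj x y W \<gamma> u v \<le> f_obj x y W \<gamma> u v)
    \<and> (\<exists>c. \<forall>u v. u \<bullet> (covmat x x *v u) = 1 \<and> v \<bullet> (covmat y y *v v) = 1 \<longrightarrow>
            g_obj x y W \<gamma> u v = gcca_obj x y W \<gamma> u v + c)
    \<and> (\<forall>u v. u \<bullet> (covmat x x *v u) = 1 \<and> v \<bullet> (covmat y y *v v) = 1 \<longrightarrow>
         ((\<forall>u' v'. u' \<bullet> (covmat x x *v u') = 1 \<and> v' \<bullet> (covmat y y *v v') = 1 \<longrightarrow>
              g_obj x y W \<gamma> u' v' \<le> g_obj x y W \<gamma> u v)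
          \<longleftrightarrow>
          (\<forall>u' v'. u' \<bullet> (covmat x x *v u') = 1 \<and> v' \<bullet> (covmat y y *v v') = 1 \<longrightarrow>
              gcca_obj x y W \<gamma> u' v' \<le> gcca_obj x y W \<gamma> u v)))"
proof -
  have N: "real CARD('n) > 0" by simp
  have dle: "degree W i \<le> dmax W" for i unfolding dmax_def by (rule Max_ge) auto
  have dnn: "degree W i \<ge> 0" for i unfolding degree_def using Wnonneg by (simp add: sum_nonneg)
  have key: "(\<Sum>i\<in>UNIV. degree W i * (u \<bullet> x i - v \<bullet> y i)^2)
      \<le> 2 * dmax W * real CARD('n) * (u \<bullet> (covmat x x *v u) + v \<bullet> (covmat y y *v v))" for u v
  proof -
    have "(\<Sum>i\<in>UNIV. degree W i * (u \<bullet> x i - v \<bullet> y i)^2)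
        \<le> (\<Sum>i\<in>UNIV. dmax W * (2 * ((u \<bullet> x i)^2 + (v \<bullet> y i)^2)))"
    proof (rule sum_mono)
      fix i
      have a: "(u \<bullet> x i - v \<bullet> y i)^2 \<le> 2 * ((u \<bullet> x i)^2 + (v \<bullet> y i)^2)"
        by (smt (verit) sum_squares_ge_zero power2_diff power2_sum zero_le_power2)
      have "degree W i * (u \<bullet> x i - v \<bullet> y i)^2 \<le> dmax W * (u \<bullet> x i - v \<bullet> y i)^2"
        by (rule mult_right_mono[OF dle]) simp
      also have "\<dots> \<le> dmax W * (2 * ((u \<bullet> x i)^2 + (v \<bullet> y i)^2))"
        by (rule mult_left_mono[OF a]) (use dle dnn in \<open>meson order_trans\<close>)
      finally show "degree W i * (u \<bullet> x i - v \<bullet> y i)^2 \<le> dmax W * (2 * ((u \<bullet> x i)^2 + (v \<bullet> y i)^2))" .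
    qed
    also have "\<dots> = 2 * dmax W * real CARD('n) * (u \<bullet> (covmat x x *v u) + v \<bullet> (covmat y y *v v))"
      using N by (simp add: cov_quad sum_distrib_left sum.distrib field_simps)
    finally show ?thesis .
  qed
  have P1: "\<forall>u v. g_obj x y W \<gamma> u v \<le> f_obj x y W \<gamma> u v"
  proof (intro allI)
    fix u v
    show "g_obj x y W \<gamma> u v \<le> f_obj x y W \<gamma> u v"
      unfolding g_obj_def f_obj_def using mult_left_mono[OF key[of u v], of "\<gamma>/2"] gamma by simp
  qed
  have P2: "\<forall>u v. u \<bullet> (covmat x x *v u) = 1 \<and> v \<bullet> (covmat y y *v v) = 1 \<longrightarrow>
            g_obj x y W \<gamma> u v = gcca_obj x y W \<gamma> u v + (- (\<gamma> / 2 * (2 * dmax W * real CARD('n) * 2)))"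
    by (simp add: g_obj_def)
  show ?thesis
    apply (intro conjI)
      apply (rule P1)
     apply (rule exI, rule P2)
    using P2 by auto
qed

end
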